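(* Let $M$ be a matroid, $\psi\colon E(M)\to\Gamma$ a labeling to an abelian group, $F\subseteq\Gamma$ finite, and $\alpha$ a positive integer. If $M$ is $(\alpha,|F|+1)$-weakly base orderable and $M$ has at least one $F$-avoiding basis, then for every basis $B$ of $M$ there exists an $F$-avoiding basis $B^*$ with $|B\setminus B^*|\le\alpha-1$.
   Context: $\psi(S):=\sum_{x\in S}\psi(x)$; a basis $B$ is $F$-avoiding if $\psi(B)\notin F$. For a positive integer $k$, an ordered pair $(B_1,B_2)$ of bases has the $k$-exchange property if there exist pairwise disjoint nonempty $X_1,\dots,X_k\subseteq B_1\setminus B_2$ and pairwise disjoint nonempty $Y_1,\dots,Y_k\subseteq B_2\setminus B_1$ such that $(B_1\setminus\bigcup_{i\in Z}X_i)\cup\bigcup_{i\in Z}Y_i$ is a basis for every $Z\subseteq[k]$. A matroid is $(\alpha,k)$-weakly base orderable if every ordered pair $(B_1,B_2)$ of bases with $|B_1\setminus B_2|\ge\alpha$ has the $k$-exchange property. *)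

theory Defs
  imports Main "HOL-Library.Disjoint_Sets"
begin

definition matroid :: "'a set \<Rightarrow> ('a set \<Rightarrow> bool) \<Rightarrow> bool" where
  "matroid E indep \<longleftrightarrow>
     finite E \<and>
     (\<forall>X. indep X \<longrightarrow> X \<subseteq> E) \<and>
     indep {} \<and>
     (\<forall>X Y. indep X \<and> Y \<subseteq> X \<longrightarrow> indep Y) \<and>
     (\<forall>X Y. indep X \<and> indep Y \<and> card X < card Y \<longrightarrow> (\<exists>y\<in>Y - X. indep (insert y X)))"

definition basis :: "'a set \<Rightarrow> ('a set \<Rightarrow> bool) \<Rightarrow> 'a set \<Rightarrow> bool" where
  "basis E indep B \<longleftrightarrow> indep B \<and> (\<forall>x\<in>E - B. \<not> indep (insert x B))"

definition F_avoiding :: "'a set \<Rightarrow> ('a set \<Rightarrow> bool) \<Rightarrow> ('a \<Rightarrow> 'g::ab_group_add) \<Rightarrow> 'g set \<Rightarrow> 'a set \<Rightarrow> bool" where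
  "F_avoiding E indep \<psi> F B \<longleftrightarrow> basis E indep B \<and> sum \<psi> B \<notin> F"

definition k_exchange :: "'a set \<Rightarrow> ('a set \<Rightarrow> bool) \<Rightarrow> nat \<Rightarrow> 'a set \<Rightarrow> 'a set \<Rightarrow> bool" where
  "k_exchange E indep k B1 B2 \<longleftrightarrow>
     (\<exists>X Y :: nat \<Rightarrow> 'a set.
        (\<forall>i\<in>{1..k}. X i \<noteq> {} \<and> X i \<subseteq> B1 - B2 \<and> Y i \<noteq> {} \<and> Y i \<subseteq> B2 - B1) \<and>
        disjoint_family_on X {1..k} \<and> disjoint_family_on Y {1..k} \<and>
        (\<forall>Z\<subseteq>{1..k}. basis E indep ((B1 - (\<Union>i\<in>Z. X i)) \<union> (\<Union>i\<in>Z. Y i))))"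

definition weakly_base_orderable :: "'a set \<Rightarrow> ('a set \<Rightarrow> bool) \<Rightarrow> nat \<Rightarrow> nat \<Rightarrow> bool" where
  "weakly_base_orderable E indep \<alpha> k \<longleftrightarrow>
     (\<forall>B1 B2. basis E indep B1 \<and> basis E indep B2 \<and> card (B1 - B2) \<ge> \<alpha>
        \<longrightarrow> k_exchange E indep k B1 B2)"

end

theory Submission
  imports Defs
begin

lemma basis_sub: "matroid E indep \<Longrightarrow> basis E indep B \<Longrightarrow> B \<subseteq> E"
  unfolding matroid_def basis_def by blast

lemma basis_fin: "matroid E indep \<Longrightarrow> basis E indep B \<Longrightarrow> finite B"
proof -
  assume m: "matroid E indep" and b: "basis E indep B"
  have "B \<subseteq> E" by (rule basis_sub[OF m b])
  moreover have "finite E" using m unfolding matroid_def by blast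
  ultimately show "finite B" by (rule finite_subset)
qed

lemma basis_card_le:
  assumes m: "matroid E indep" and b1: "basis E indep B1" and b2: "basis E indep B2"
  shows "card B2 \<le> card B1"
proof (rule ccontr)
  assume "\<not> ?thesis"
  hence "card B1 < card B2" by simp
  with m b1 b2 obtain y where y: "y \<in> B2 - B1" "indep (insert y B1)"
    unfolding matroid_def basis_def by blast
  have "y \<in> E" using y basis_sub[OF m b2] by blast
  with y b1 show False unfolding basis_def by blast
qed

lemma basis_diff_card:
  assumes m: "matroid E indep" and b1: "basis E indep B1" and b2: "basis E indep B2"
  shows "card (B1 - B2) = card (B2 - B1)"
proof -
  have "card B1 = card B2" using basis_card_le[OF m b1 b2] basis_card_le[OF m b2 b1] by simp
  moreover have "card (B1 - B2) = card B1 - card (B1 \<inter> B2)"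
    using basis_fin[OF m b1] by (simp add: card_Diff_subset_Int)
  moreover have "card (B2 - B1) = card B2 - card (B1 \<inter> B2)"
    using basis_fin[OF m b2] by (simp add: card_Diff_subset_Int Int_commute)
  ultimately show ?thesis by simp
qed

lemma step:
  assumes m: "matroid E indep" and fF: "finite F"
    and kx: "k_exchange E indep (card F + 1) B' B"
    and bB: "basis E indep B" and av: "F_avoiding E indep \<psi> F B'"
  shows "\<exists>B''. F_avoiding E indep \<psi> F B'' \<and> card (B - B'') < card (B - B')"
proof -
  let ?k = "card F + 1"
  have bB': "basis E indep B'" and nF: "sum \<psi> B' \<notin> F" using av unfolding F_avoiding_def by auto
  have finB: "finite B" and finB': "finite B'" using basis_fin[OF m] bB bB' by auto
  obtain X Y where XY: "\<forall>i\<in>{1..?k}. X i \<noteq> {} \<and> X i \<subseteq> B' - B \<and> Y i \<noteq> {} \<and> Y i \<subseteq> B - B'"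
    and dX: "disjoint_family_on X {1..?k}" and dY: "disjoint_family_on Y {1..?k}"
    and bZ: "\<forall>Z\<subseteq>{1..?k}. basis E indep ((B' - (\<Union>i\<in>Z. X i)) \<union> (\<Union>i\<in>Z. Y i))"
    using kx unfolding k_exchange_def by blast
  define BZ where "BZ Z = (B' - (\<Union>i\<in>Z. X i)) \<union> (\<Union>i\<in>Z. Y i)" for Z
  define d where "d i = sum \<psi> (Y i) - sum \<psi> (X i)" for i
  have smaller: "card (B - BZ Z) < card (B - B')" if Z: "Z \<subseteq> {1..?k}" "Z \<noteq> {}" for Z
  proof -
    obtain i where i: "i \<in> Z" using Z by blast
    have Yi: "Y i \<noteq> {}" "Y i \<subseteq> B - B'" using XY i Z by auto
    have "B - BZ Z \<subseteq> (B - B') - Y i"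
    proof
      fix x assume x: "x \<in> B - BZ Z"
      have "x \<notin> Y i" using x i unfolding BZ_def by blast
      moreover have "x \<notin> B'"
      proof
        assume "x \<in> B'"
        have "x \<notin> (\<Union>i\<in>Z. X i)" using XY Z \<open>x \<in> B'\<close> x by blast
        then show False using x \<open>x \<in> B'\<close> unfolding BZ_def by blast
      qed
      ultimately show "x \<in> (B - B') - Y i" using x by blast
    qed
    moreover have "(B - B') - Y i \<subset> B - B'" using Yi by blast
    ultimately have "B - BZ Z \<subset> B - B'" by blast
    then show ?thesis using finB by (meson finite_Diff psubset_card_mono)
  qed
  have sumZ: "sum \<psi> (BZ Z) = sum \<psi> B' + sum d Z" if Z: "Z \<subseteq> {1..?k}" for Z
  proof -
    have fZ: "finite Z" using Z finite_subset by blast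
    have finX: "\<forall>i\<in>Z. finite (X i)" and finY: "\<forall>i\<in>Z. finite (Y i)"
      using XY Z finB finB' by (meson finite_Diff finite_subset subsetD)+
    have dX': "\<forall>i\<in>Z. \<forall>j\<in>Z. i \<noteq> j \<longrightarrow> X i \<inter> X j = {}"
      using dX Z unfolding disjoint_family_on_def by blast
    have dY': "\<forall>i\<in>Z. \<forall>j\<in>Z. i \<noteq> j \<longrightarrow> Y i \<inter> Y j = {}"
      using dY Z unfolding disjoint_family_on_def by blast
    have sX: "sum \<psi> (\<Union>i\<in>Z. X i) = (\<Sum>i\<in>Z. sum \<psi> (X i))"
      by (rule sum.UNION_disjoint[OF fZ finX dX'])
    have sY: "sum \<psi> (\<Union>i\<in>Z. Y i) = (\<Sum>i\<in>Z. sum \<psi> (Y i))"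
      by (rule sum.UNION_disjoint[OF fZ finY dY'])
    have subX: "(\<Union>i\<in>Z. X i) \<subseteq> B'" using XY Z by blast
    have disj: "(B' - (\<Union>i\<in>Z. X i)) \<inter> (\<Union>i\<in>Z. Y i) = {}" using XY Z by blast
    have fUY: "finite (\<Union>i\<in>Z. Y i)" using fZ finY by blast
    have "sum \<psi> (BZ Z) = sum \<psi> (B' - (\<Union>i\<in>Z. X i)) + sum \<psi> (\<Union>i\<in>Z. Y i)"
      unfolding BZ_def using disj fUY finB' by (simp add: sum.union_disjoint)
    also have "sum \<psi> (B' - (\<Union>i\<in>Z. X i)) = sum \<psi> B' - sum \<psi> (\<Union>i\<in>Z. X i)"
      using subX finB' by (simp add: sum_diff)
    finally show ?thesis using sX sY by (simp add: d_def sum_subtractf)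
  qed
  have "\<exists>Z. Z \<subseteq> {1..?k} \<and> Z \<noteq> {} \<and> sum \<psi> (BZ Z) \<notin> F"
  proof (rule ccontr)
    assume H: "\<not> ?thesis"
    define f where "f j = sum \<psi> B' + sum d {1..j}" for j
    have "f ` {1..?k} \<subseteq> F"
    proof
      fix y assume "y \<in> f ` {1..?k}"
      then obtain j where j: "j \<in> {1..?k}" "y = f j" by blast
      have "{1..j} \<subseteq> {1..?k}" "{1..j} \<noteq> {}" using j by auto
      hence "sum \<psi> (BZ {1..j}) \<in> F" using H by blast
      then show "y \<in> F" using sumZ[of "{1..j}"] j unfolding f_def by auto
    qed
    moreover have "\<not> card {1..?k} \<le> card F" by simp
    ultimately have "\<not> inj_on f {1..?k}" using card_inj_on_le fF by blast
    then obtain a0 b0 where ab0: "a0 \<in> {1..?k}" "b0 \<in> {1..?k}" "a0 \<noteq> b0" "f a0 = f b0"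
      unfolding inj_on_def by blast
    define a where "a = min a0 b0"
    define b where "b = max a0 b0"
    have ab: "a \<in> {1..?k}" "b \<in> {1..?k}" "a < b" "f a = f b"
      using ab0 unfolding a_def b_def by (auto simp: min_def max_def)
    have "{1..b} = {1..a} \<union> {Suc a..b}" using ab by auto
    hence "sum d {1..b} = sum d {1..a} + sum d {Suc a..b}"
      by (simp add: sum.union_disjoint)
    hence d0: "sum d {Suc a..b} = 0" using ab(4) unfolding f_def by simp
    have "{Suc a..b} \<subseteq> {1..?k}" "{Suc a..b} \<noteq> {}" using ab by auto
    with H have "sum \<psi> (BZ {Suc a..b}) \<in> F" by blast
    with sumZ[of "{Suc a..b}"] d0 \<open>{Suc a..b} \<subseteq> {1..?k}\<close> nF show False by simp
  qed
  then obtain Z where Z: "Z \<subseteq> {1..?k}" "Z \<noteq> {}" "sum \<psi> (BZ Z) \<notin> F" by blast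
  have "F_avoiding E indep \<psi> F (BZ Z)" using bZ Z unfolding F_avoiding_def BZ_def by blast
  with smaller[OF Z(1,2)] show ?thesis by blast
qed

theorem theorem5p10:
  fixes E :: "'a set" and indep :: "'a set \<Rightarrow> bool"
    and \<psi> :: "'a \<Rightarrow> 'g::ab_group_add" and F :: "'g set" and \<alpha> :: nat
  assumes "matroid E indep"
    and "finite F"
    and "\<alpha> > 0"
    and "weakly_base_orderable E indep \<alpha> (card F + 1)"
    and "\<exists>B. F_avoiding E indep \<psi> F B"
  shows "\<forall>B. basis E indep B \<longrightarrow>
           (\<exists>B'. F_avoiding E indep \<psi> F B' \<and> card (B - B') \<le> \<alpha> - 1)"
proof (intro allI impI)
  fix B assume bB: "basis E indep B"
  define P where "P n = (\<exists>B'. F_avoiding E indep \<psi> F B' \<and> card (B - B') = n)" for n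
  have "\<exists>n. P n" using assms(5) unfolding P_def by blast
  then obtain n where Pn: "P n" and mn: "\<forall>m<n. \<not> P m" by (metis exists_least_iff)
  then obtain B' where av: "F_avoiding E indep \<psi> F B'" and cn: "card (B - B') = n"
    unfolding P_def by blast
  show "\<exists>B'. F_avoiding E indep \<psi> F B' \<and> card (B - B') \<le> \<alpha> - 1"
  proof (cases "n \<le> \<alpha> - 1")
    case True thus ?thesis using av cn by blast
  next
    case False
    have bB': "basis E indep B'" using av unfolding F_avoiding_def by blast
    have "card (B' - B) \<ge> \<alpha>" using False cn basis_diff_card[OF assms(1) bB bB'] by simp
    hence kx: "k_exchange E indep (card F + 1) B' B"
      using assms(4) bB bB' unfolding weakly_base_orderable_def by blast
    from step[OF assms(1,2) kx bB av] obtain B'' where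
      "F_avoiding E indep \<psi> F B''" "card (B - B'') < n" using cn by blast
    with mn show ?thesis unfolding P_def by blast
  qed
qed

end
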